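(* Let $G$ be a graph of order $n\ge3$ with minimum degree $\delta(G)=2$. Then $\operatorname{ZIR}(G)>\frac n3$.
   Context: A nonempty $F\subseteq V(G)$ is a fort if every $v\notin F$ has $|N(v)\cap F|\ne1$. A private fort of $x\in S$ relative to $S$ is a fort $F$ with $S\cap F=\{x\}$; $S$ is a ZIr-set if every element of $S$ has a private fort. $\operatorname{ZIR}(G)$ is the maximum cardinality of an inclusion-maximal ZIr-set. *)

theory Defs
  imports Main
begin

definition simple_graph :: "'a set \<Rightarrow> ('a \<Rightarrow> 'a \<Rightarrow> bool) \<Rightarrow> bool" where
  "simple_graph V E \<longleftrightarrow> finite V \<and> (\<forall>u v. E u v \<longrightarrow> u \<in> V \<and> v \<in> V)
     \<and> (\<forall>u v. E u v \<longrightarrow> E v u) \<and> (\<forall>v. \<not> E v v)"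

definition nbhd :: "'a set \<Rightarrow> ('a \<Rightarrow> 'a \<Rightarrow> bool) \<Rightarrow> 'a \<Rightarrow> 'a set" where
  "nbhd V E v = {u \<in> V. E v u}"

definition degree :: "'a set \<Rightarrow> ('a \<Rightarrow> 'a \<Rightarrow> bool) \<Rightarrow> 'a \<Rightarrow> nat" where
  "degree V E v = card (nbhd V E v)"

definition min_degree :: "'a set \<Rightarrow> ('a \<Rightarrow> 'a \<Rightarrow> bool) \<Rightarrow> nat" where
  "min_degree V E = Min (degree V E ` V)"

definition is_fort :: "'a set \<Rightarrow> ('a \<Rightarrow> 'a \<Rightarrow> bool) \<Rightarrow> 'a set \<Rightarrow> bool" where
  "is_fort V E F \<longleftrightarrow> F \<noteq> {} \<and> F \<subseteq> V \<and>
     (\<forall>v \<in> V - F. card (nbhd V E v \<inter> F) \<noteq> 1)"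

definition private_fort :: "'a set \<Rightarrow> ('a \<Rightarrow> 'a \<Rightarrow> bool) \<Rightarrow> 'a set \<Rightarrow> 'a \<Rightarrow> 'a set \<Rightarrow> bool" where
  "private_fort V E S x F \<longleftrightarrow> is_fort V E F \<and> S \<inter> F = {x}"

definition ZIr_set :: "'a set \<Rightarrow> ('a \<Rightarrow> 'a \<Rightarrow> bool) \<Rightarrow> 'a set \<Rightarrow> bool" where
  "ZIr_set V E S \<longleftrightarrow> S \<subseteq> V \<and> (\<forall>x \<in> S. \<exists>F. private_fort V E S x F)"

definition maximal_ZIr_set :: "'a set \<Rightarrow> ('a \<Rightarrow> 'a \<Rightarrow> bool) \<Rightarrow> 'a set \<Rightarrow> bool" where
  "maximal_ZIr_set V E S \<longleftrightarrow> ZIr_set V E S \<and> (\<forall>T. ZIr_set V E T \<and> S \<subseteq> T \<longrightarrow> T = S)"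

definition ZIR :: "'a set \<Rightarrow> ('a \<Rightarrow> 'a \<Rightarrow> bool) \<Rightarrow> nat" where
  "ZIR V E = Max (card ` {S. maximal_ZIr_set V E S})"

end

theory Submission
  imports Defs
begin


definition mono_pairs :: "'a set \<Rightarrow> ('a \<Rightarrow> 'a \<Rightarrow> bool) \<Rightarrow> ('a \<Rightarrow> nat) \<Rightarrow> ('a \<times> 'a) set" where
  "mono_pairs U E g = {p \<in> U \<times> U. E (fst p) (snd p) \<and> g (fst p) = g (snd p)}"

lemma mono_split:
  assumes sym: "\<And>u w. E u w \<Longrightarrow> E w u" and irr: "\<And>u. \<not> E u u"
    and fin: "finite U" and v: "v \<in> U"
  shows "card (mono_pairs U E g) = card (mono_pairs U E g \<inter> {p. fst p \<noteq> v \<and> snd p \<noteq> v})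
           + 2 * card {w \<in> U. E v w \<and> g w = g v}"
proof -
  let ?M = "mono_pairs U E g"
  let ?R = "?M \<inter> {p. fst p \<noteq> v \<and> snd p \<noteq> v}"
  let ?W = "{w \<in> U. E v w \<and> g w = g v}"
  let ?L = "(\<lambda>w. (v, w)) ` ?W"
  let ?T = "(\<lambda>w. (w, v)) ` ?W"
  have finM: "finite ?M" unfolding mono_pairs_def using fin by (auto intro: finite_subset[of _ "U \<times> U"])
  have eq: "?M = ?R \<union> (?L \<union> ?T)"
  proof
    show "?M \<subseteq> ?R \<union> (?L \<union> ?T)"
    proof
      fix p assume p: "p \<in> ?M"
      obtain a b where ab: "p = (a, b)" by (cases p)
      show "p \<in> ?R \<union> (?L \<union> ?T)"
      proof (cases "a = v")
        case True then show ?thesis using p ab unfolding mono_pairs_def by auto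
      next
        case False
        show ?thesis
        proof (cases "b = v")
          case True then show ?thesis using p ab False sym unfolding mono_pairs_def
            by (auto simp: image_iff)
        next
          case False2: False
          then show ?thesis using p ab False by auto
        qed
      qed
    qed
    show "?R \<union> (?L \<union> ?T) \<subseteq> ?M" using v sym unfolding mono_pairs_def by auto
  qed
  have d1: "?R \<inter> (?L \<union> ?T) = {}" by auto
  have d2: "?L \<inter> ?T = {}" using irr by auto
  have cL: "card ?L = card ?W" by (rule card_image) (auto simp: inj_on_def)
  have cT: "card ?T = card ?W" by (rule card_image) (auto simp: inj_on_def)
  have fR: "finite ?R" using finM by auto
  have fW: "finite ?W" using fin by auto
  have "card ?M = card ?R + card (?L \<union> ?T)"
    by (subst eq, rule card_Un_disjoint) (use fR fW d1 in auto)
  also have "card (?L \<union> ?T) = card ?L + card ?T"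
    by (rule card_Un_disjoint) (use fW d2 in auto)
  finally show ?thesis using cL cT by simp
qed

lemma coloring_exists:
  assumes sym: "\<And>u w. E u w \<Longrightarrow> E w u" and irr: "\<And>u. \<not> E u u"
    and fin: "finite U" and k: "0 < (k::nat)"
  shows "\<exists>f. (\<forall>u\<in>U. f u < k) \<and>
    (\<forall>v\<in>U. \<forall>j<k. card {w\<in>U. E v w \<and> f w = f v} \<le> card {w\<in>U. E v w \<and> f w = j})"
proof -
  obtain f where fP: "\<forall>u\<in>U. f u < (k::nat)"
    and fmin: "\<forall>g. (\<forall>u\<in>U. g u < k) \<longrightarrow> card (mono_pairs U E f) \<le> card (mono_pairs U E g)"
    using ex_has_least_nat[where P="\<lambda>f. \<forall>u\<in>U. f u < k" and k="\<lambda>_. 0"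
        and m="\<lambda>f. card (mono_pairs U E f)"] k by auto
  have "\<forall>v\<in>U. \<forall>j<k. card {w\<in>U. E v w \<and> f w = f v} \<le> card {w\<in>U. E v w \<and> f w = j}"
  proof (intro ballI allI impI)
    fix v j assume v: "v \<in> U" and j: "j < k"
    let ?g = "f(v := j)"
    have gP: "\<forall>u\<in>U. ?g u < k" using fP j by auto
    have le: "card (mono_pairs U E f) \<le> card (mono_pairs U E ?g)" using fmin gP by blast
    have R: "mono_pairs U E f \<inter> {p. fst p \<noteq> v \<and> snd p \<noteq> v} = mono_pairs U E ?g \<inter> {p. fst p \<noteq> v \<and> snd p \<noteq> v}"
      unfolding mono_pairs_def by auto
    have W: "{w \<in> U. E v w \<and> ?g w = ?g v} = {w\<in>U. E v w \<and> f w = j}"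
      using irr by auto
    show "card {w\<in>U. E v w \<and> f w = f v} \<le> card {w\<in>U. E v w \<and> f w = j}"
      using le mono_split[where E=E and g=f, OF sym irr fin v] mono_split[where E=E and g="?g", OF sym irr fin v] R W by simp
  qed
  then show ?thesis using fP by blast
qed

lemma pigeon:
  assumes fin: "finite U" and k: "0 < k" and f: "\<forall>u\<in>U. f u < (k::nat)"
  shows "\<exists>j<k. card U \<le> k * card {u\<in>U. f u = j}"
proof (rule ccontr)
  assume "\<not> ?thesis"
  then have lt: "\<forall>j\<in>{..<k}. k * card {u\<in>U. f u = j} < card U" by auto
  have U: "U = (\<Union>j\<in>{..<k}. {u\<in>U. f u = j})" using f by auto
  have "card U = (\<Sum>j\<in>{..<k}. card {u\<in>U. f u = j})"
    by (subst U, rule card_UN_disjoint) (use fin in auto)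
  then have "k * card U = (\<Sum>j\<in>{..<k}. k * card {u\<in>U. f u = j})" by (simp add: sum_distrib_left)
  also have "\<dots> < (\<Sum>j\<in>{..<k}. card U)"
    by (rule sum_strict_mono) (use k lt in auto)
  also have "\<dots> = k * card U" by simp
  finally show False by simp
qed



lemma sg_facts:
  assumes "simple_graph V E"
  shows "finite V" "\<And>u v. E u v \<Longrightarrow> u \<in> V" "\<And>u v. E u v \<Longrightarrow> v \<in> V"
    "\<And>u v. E u v \<Longrightarrow> E v u" "\<And>v. \<not> E v v"
  using assms unfolding simple_graph_def by blast+

lemma nbhd_eq: "simple_graph V E \<Longrightarrow> nbhd V E v = {u. E v u}"
  unfolding nbhd_def simple_graph_def by auto

lemma finite_nbhd: "simple_graph V E \<Longrightarrow> finite (nbhd V E v)"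
  unfolding nbhd_def simple_graph_def by auto

lemma Q_ZIr:
  assumes sg: "simple_graph V E" and SV: "S \<subseteq> V"
    and Q: "\<forall>s\<in>S. 2 \<le> card (nbhd V E s - S)"
  shows "ZIr_set V E S"
  unfolding ZIr_set_def
proof (intro conjI ballI)
  show "S \<subseteq> V" by fact
  fix x assume x: "x \<in> S"
  let ?F = "(V - S) \<union> {x}"
  have "is_fort V E ?F"
    unfolding is_fort_def
  proof (intro conjI ballI)
    show "?F \<noteq> {}" by simp
    show "?F \<subseteq> V" using x SV by auto
    fix v assume v: "v \<in> V - ?F"
    then have vS: "v \<in> S" by auto
    have sub: "nbhd V E v - S \<subseteq> nbhd V E v \<inter> ?F" unfolding nbhd_def by auto
    have "2 \<le> card (nbhd V E v - S)" using Q vS by auto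
    also have "\<dots> \<le> card (nbhd V E v \<inter> ?F)"
      by (rule card_mono) (use finite_nbhd[OF sg] sub in auto)
    finally show "card (nbhd V E v \<inter> ?F) \<noteq> 1" by simp
  qed
  moreover have "S \<inter> ?F = {x}" using x by auto
  ultimately show "\<exists>F. private_fort V E S x F" unfolding private_fort_def by blast
qed

lemma ZIR_ge:
  assumes fin: "finite V" and Z: "ZIr_set V E S"
  shows "card S \<le> ZIR V E"
proof -
  let ?Z = "{T. ZIr_set V E T \<and> S \<subseteq> T}"
  have finZ: "finite ?Z"
    by (rule finite_subset[of _ "Pow V"]) (use fin in \<open>auto simp: ZIr_set_def\<close>)
  have bnd: "\<forall>y. y \<in> ?Z \<longrightarrow> card y < Suc (card V)"
    using fin by (auto simp: ZIr_set_def less_Suc_eq_le intro: card_mono)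
  have "\<exists>T. T \<in> ?Z \<and> (\<forall>y. y \<in> ?Z \<longrightarrow> card y \<le> card T)"
    by (rule Lattices_Big.ex_has_greatest_nat[where k=S and b="Suc (card V)"]) (use Z bnd in auto)
  then obtain T where T: "T \<in> ?Z" and Tmax: "\<forall>T'\<in>?Z. card T' \<le> card T" by blast
  have TV: "T \<subseteq> V" using T by (auto simp: ZIr_set_def)
  have maxT: "maximal_ZIr_set V E T"
    unfolding maximal_ZIr_set_def
  proof (intro conjI allI impI)
    show "ZIr_set V E T" using T by auto
    fix T' assume a: "ZIr_set V E T' \<and> T \<subseteq> T'"
    then have "T' \<in> ?Z" using T by auto
    then have "card T' \<le> card T" using Tmax by auto
    moreover have "finite T'" using a fin by (auto simp: ZIr_set_def intro: finite_subset)
    ultimately show "T' = T" using a card_subset_eq by (metis card_mono antisym)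
  qed
  have finM: "finite {S. maximal_ZIr_set V E S}"
    by (rule finite_subset[of _ "Pow V"]) (use fin in \<open>auto simp: maximal_ZIr_set_def ZIr_set_def\<close>)
  have "card T \<le> ZIR V E" unfolding ZIR_def
    by (rule Max_ge) (use finM maxT in auto)
  moreover have "card S \<le> card T" using T TV fin by (auto intro: card_mono finite_subset)
  ultimately show ?thesis by simp
qed



definition NB :: "'a set \<Rightarrow> ('a \<Rightarrow> 'a \<Rightarrow> bool) \<Rightarrow> 'a set \<Rightarrow> 'a set" where
  "NB V E Y = {u \<in> V. \<exists>y\<in>Y. E y u}"

lemma NB_UN: "simple_graph V E \<Longrightarrow> Y \<subseteq> V \<Longrightarrow> NB V E Y = (\<Union>y\<in>Y. nbhd V E y)"
  unfolding NB_def nbhd_def by auto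

lemma card_NB:
  assumes sg: "simple_graph V E" and YV: "Y \<subseteq> V" and Y2: "\<forall>y\<in>Y. degree V E y = 2"
  shows "card (NB V E Y) \<le> 2 * card Y"
proof -
  have finY: "finite Y" using YV sg_facts(1)[OF sg] finite_subset by blast
  have "card (NB V E Y) \<le> (\<Sum>y\<in>Y. card (nbhd V E y))"
    unfolding NB_UN[OF sg YV] by (rule card_UN_le[OF finY])
  also have "\<dots> = (\<Sum>y\<in>Y. 2)" using Y2 by (auto simp: degree_def)
  finally show ?thesis by simp
qed

lemma NB_Y_disj:
  assumes ind: "\<forall>a\<in>Y. \<forall>b\<in>Y. \<not> E a b"
  shows "NB V E Y \<inter> Y = {}"
  using ind unfolding NB_def by auto

lemma nbhd_sub_NB: "y \<in> Y \<Longrightarrow> nbhd V E y \<subseteq> NB V E Y"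
  unfolding NB_def nbhd_def by auto

lemma out_decomp:
  assumes sg: "simple_graph V E"
    and s: "s \<in> V - (Y \<union> NB V E Y)" and PU: "P \<subseteq> V - (Y \<union> NB V E Y)"
  shows "card (nbhd V E s) = card {w \<in> V - (Y \<union> NB V E Y). E s w} + card (nbhd V E s \<inter> NB V E Y)"
    and "card (nbhd V E s - (P \<union> Y)) = card ({w \<in> V - (Y \<union> NB V E Y). E s w} - P) + card (nbhd V E s \<inter> NB V E Y)"
proof -
  let ?U = "V - (Y \<union> NB V E Y)"
  have fin: "finite V" using sg_facts(1)[OF sg] .
  have noY: "nbhd V E s \<inter> Y = {}"
  proof (rule ccontr)
    assume "nbhd V E s \<inter> Y \<noteq> {}"
    then obtain y where y: "y \<in> Y" "E s y" unfolding nbhd_def by auto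
    then have "E y s" using sg_facts(4)[OF sg] by blast
    then have "s \<in> NB V E Y" using y s unfolding NB_def by auto
    then show False using s by auto
  qed
  have e1: "nbhd V E s = {w \<in> ?U. E s w} \<union> (nbhd V E s \<inter> NB V E Y)"
    using noY unfolding nbhd_def by auto
  have e2: "nbhd V E s - (P \<union> Y) = ({w \<in> ?U. E s w} - P) \<union> (nbhd V E s \<inter> NB V E Y)"
    using noY PU unfolding nbhd_def by auto
  show "card (nbhd V E s) = card {w \<in> ?U. E s w} + card (nbhd V E s \<inter> NB V E Y)"
    by (subst e1, rule card_Un_disjoint) (use fin in \<open>auto simp: nbhd_def\<close>)
  show "card (nbhd V E s - (P \<union> Y)) = card ({w \<in> ?U. E s w} - P) + card (nbhd V E s \<inter> NB V E Y)"
    by (subst e2, rule card_Un_disjoint) (use fin in \<open>auto simp: nbhd_def\<close>)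
qed

lemma Y_out:
  assumes sg: "simple_graph V E" and y: "y \<in> Y" and Y2: "degree V E y = 2"
    and ind: "\<forall>a\<in>Y. \<forall>b\<in>Y. \<not> E a b" and PU: "P \<subseteq> V - (Y \<union> NB V E Y)"
  shows "2 \<le> card (nbhd V E y - (P \<union> Y))"
proof -
  have "nbhd V E y - (P \<union> Y) = nbhd V E y"
    using nbhd_sub_NB[OF y, where V=V and E=E] NB_Y_disj[OF ind, where V=V] PU by blast
  then show ?thesis using Y2 by (simp add: degree_def)
qed

lemma sizes:
  assumes sg: "simple_graph V E" and YV: "Y \<subseteq> V" and ind: "\<forall>a\<in>Y. \<forall>b\<in>Y. \<not> E a b"
  shows "card V = card (V - (Y \<union> NB V E Y)) + card Y + card (NB V E Y)"
proof -
  have fin: "finite V" using sg_facts(1)[OF sg] .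
  have sub: "Y \<union> NB V E Y \<subseteq> V" using YV unfolding NB_def by auto
  have "card V = card (V - (Y \<union> NB V E Y)) + card (Y \<union> NB V E Y)"
    using card_Diff_subset[OF finite_subset[OF sub fin] sub] card_mono[OF fin sub] by simp
  moreover have "card (Y \<union> NB V E Y) = card Y + card (NB V E Y)"
    by (rule card_Un_disjoint) (use fin YV NB_Y_disj[OF ind, where V=V] in \<open>auto intro: finite_subset simp: NB_def\<close>)
  ultimately show ?thesis by simp
qed



lemma three_out:
  assumes fin: "finite A" and g: "\<forall>w\<in>A. g w < (3::nat)" and j: "j < 3"
    and opt: "\<forall>i<3. card {w\<in>A. g w = j} \<le> card {w\<in>A. g w = i}"
    and small: "card {w\<in>A. g w \<noteq> j} \<le> 1"
  shows "card {w\<in>A. g w \<noteq> j} = card A"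
proof -
  let ?B = "{w\<in>A. g w \<noteq> j}"
  have finB: "finite ?B" using fin by auto
  obtain i where i: "i < 3" "i \<noteq> j" "{w\<in>A. g w = i} = {}"
  proof (cases "?B = {}")
    case True
    let ?i = "if j = 0 then 1 else (0::nat)"
    have "{w\<in>A. g w = ?i} = {}" using True by auto
    then show ?thesis using that[of ?i] j by auto
  next
    case False
    have "card ?B \<noteq> 0" using False finB by simp
    then have "card ?B = 1" using small by simp
    then obtain w0 where w0: "?B = {w0}" by (rule card_1_singletonE)
    let ?i = "if j \<noteq> 0 \<and> g w0 \<noteq> 0 then 0 else if j \<noteq> 1 \<and> g w0 \<noteq> 1 then 1 else (2::nat)"
    have ne: "?i \<noteq> j" "?i \<noteq> g w0" "?i < 3" using j by auto
    have "{w\<in>A. g w = ?i} = {}"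
    proof (rule ccontr)
      assume "{w\<in>A. g w = ?i} \<noteq> {}"
      then obtain w where w: "w \<in> A" "g w = ?i" by blast
      then have "w \<in> ?B" using ne by auto
      then have "w = w0" using w0 by auto
      then show False using w ne by auto
    qed
    then show ?thesis using that[of ?i] ne by auto
  qed
  have "card {w\<in>A. g w = j} \<le> card {w\<in>A. g w = i}" using opt i(1) by blast
  then have "card {w\<in>A. g w = j} = 0" using i(3) by simp
  then have "{w\<in>A. g w = j} = {}" using fin by simp
  then have "?B = A" by auto
  then show ?thesis by simp
qed

lemma two_out:
  assumes fin: "finite A" and g: "\<forall>w\<in>A. g w < (2::nat)" and j: "j < 2"
    and opt: "\<forall>i<2. card {w\<in>A. g w = j} \<le> card {w\<in>A. g w = i}"
  shows "card A \<le> 2 * card {w\<in>A. g w \<noteq> j}"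
proof -
  have pw: "\<And>w. w \<in> A \<Longrightarrow> (g w \<noteq> j) = (g w = 1 - j)"
  proof -
    fix w assume "w \<in> A"
    then have "g w < 2" using g by blast
    then show "(g w \<noteq> j) = (g w = 1 - j)" using j by arith
  qed
  have eq: "{w\<in>A. g w \<noteq> j} = {w\<in>A. g w = 1 - j}" using pw by blast
  have "card A = card {w\<in>A. g w = j} + card {w\<in>A. g w \<noteq> j}"
  proof -
    have "A = {w\<in>A. g w = j} \<union> {w\<in>A. g w \<noteq> j}" by auto
    then have "card A = card ({w\<in>A. g w = j} \<union> {w\<in>A. g w \<noteq> j})" by simp
    also have "\<dots> = card {w\<in>A. g w = j} + card {w\<in>A. g w \<noteq> j}"
      by (rule card_Un_disjoint) (use fin in auto)
    finally show ?thesis .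
  qed
  moreover have "card {w\<in>A. g w = j} \<le> card {w\<in>A. g w \<noteq> j}"
    using opt[rule_format, of "1 - j"] j eq by auto
  ultimately show ?thesis by simp
qed



lemma caseA:
  assumes sg: "simple_graph V E" and deg: "\<forall>v\<in>V. 2 \<le> degree V E v"
    and YV: "Y \<subseteq> V" and Y2: "\<forall>y\<in>Y. degree V E y = 2"
    and ind: "\<forall>a\<in>Y. \<forall>b\<in>Y. \<not> E a b"
    and cA: "card (NB V E Y) < 2 * card Y"
  shows "\<exists>S. ZIr_set V E S \<and> card V < 3 * card S"
proof -
  let ?U = "V - (Y \<union> NB V E Y)"
  have finV: "finite V" using sg_facts(1)[OF sg] .
  have finU: "finite ?U" using finV by auto
  have sym: "\<And>u w. E u w \<Longrightarrow> E w u" and irr: "\<And>u. \<not> E u u" using sg_facts[OF sg] by blast+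
  obtain f where f3: "\<forall>u\<in>?U. f u < (3::nat)"
    and fopt: "\<forall>v\<in>?U. \<forall>j<3. card {w\<in>?U. E v w \<and> f w = f v} \<le> card {w\<in>?U. E v w \<and> f w = j}"
    using coloring_exists[where E=E and U="?U" and k=3, OF sym irr finU] by auto
  obtain j where j: "j < 3" and jP: "card ?U \<le> 3 * card {u\<in>?U. f u = j}"
    using pigeon[OF finU _ f3] by auto
  define P where "P = {u\<in>?U. f u = j}"
  have PU: "P \<subseteq> ?U" unfolding P_def by auto
  define S where "S = P \<union> Y"
  have SV: "S \<subseteq> V" using PU YV unfolding S_def by auto
  have Q: "\<forall>s\<in>S. 2 \<le> card (nbhd V E s - S)"
  proof
    fix s assume "s \<in> S"
    then consider (y) "s \<in> Y" | (p) "s \<in> P" unfolding S_def by auto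
    then show "2 \<le> card (nbhd V E s - S)"
    proof cases
      case y
      have "degree V E s = 2" using Y2 y by blast
      then show ?thesis using Y_out[OF sg y _ ind PU] unfolding S_def by blast
    next
      case p
      have sU: "s \<in> ?U" and fs: "f s = j" using p unfolding P_def by auto
      let ?A = "{w\<in>?U. E s w}"
      have d1: "card (nbhd V E s) = card ?A + card (nbhd V E s \<inter> NB V E Y)"
        using out_decomp(1)[OF sg sU PU] .
      have d2: "card (nbhd V E s - S) = card (?A - P) + card (nbhd V E s \<inter> NB V E Y)"
        using out_decomp(2)[OF sg sU PU] unfolding S_def .
      have AP: "?A - P = {w\<in>?A. f w \<noteq> j}" unfolding P_def by auto
      have finA: "finite ?A" using finV by simp
      have eqs: "\<And>i. {w\<in>?A. f w = i} = {w\<in>?U. E s w \<and> f w = i}" by blast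
      have opt0: "\<forall>i<3. card {w\<in>?U. E s w \<and> f w = f s} \<le> card {w\<in>?U. E s w \<and> f w = i}"
        using fopt sU by blast
      have opt: "\<forall>i<3. card {w\<in>?A. f w = j} \<le> card {w\<in>?A. f w = i}"
        unfolding eqs using opt0 fs by simp
      have "2 \<le> degree V E s" using deg sU by auto
      then have "2 \<le> card ?A + card (nbhd V E s \<inter> NB V E Y)" using d1 by (simp add: degree_def)
      moreover have f3A: "\<forall>w\<in>?A. f w < 3" using f3 by blast
      have "card {w\<in>?A. f w \<noteq> j} \<le> 1 \<longrightarrow> card {w\<in>?A. f w \<noteq> j} = card ?A"
        using three_out[OF finA f3A j opt] by blast
      ultimately show ?thesis using d2 AP by (cases "card {w\<in>?A. f w \<noteq> j} \<le> 1") simp_all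
    qed
  qed
  have ZS: "ZIr_set V E S" by (rule Q_ZIr[OF sg SV Q])
  have disj: "P \<inter> Y = {}" using PU by auto
  have cS: "card S = card P + card Y"
    unfolding S_def by (rule card_Un_disjoint) (use finU PU finV YV disj in \<open>auto intro: finite_subset\<close>)
  have "card V = card ?U + card Y + card (NB V E Y)" using sizes[OF sg YV ind] .
  then have "card V < 3 * card S" using cS jP cA unfolding P_def by linarith
  then show ?thesis using ZS by blast
qed



lemma caseB:
  assumes sg: "simple_graph V E" and deg: "\<forall>v\<in>V. 2 \<le> degree V E v"
    and YV: "Y \<subseteq> V" and Y2: "\<forall>y\<in>Y. degree V E y = 2"
    and ind: "\<forall>a\<in>Y. \<forall>b\<in>Y. \<not> E a b"
    and cov: "\<forall>v\<in>V. degree V E v = 2 \<longrightarrow> v \<in> Y \<or> v \<in> NB V E Y"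
    and cB: "3 * card (NB V E Y) < card V + 3 * card Y"
  shows "\<exists>S. ZIr_set V E S \<and> card V < 3 * card S"
proof -
  let ?U = "V - (Y \<union> NB V E Y)"
  have finV: "finite V" using sg_facts(1)[OF sg] .
  have finU: "finite ?U" using finV by auto
  have sym: "\<And>u w. E u w \<Longrightarrow> E w u" and irr: "\<And>u. \<not> E u u" using sg_facts[OF sg] by blast+
  obtain f where f2: "\<forall>u\<in>?U. f u < (2::nat)"
    and fopt: "\<forall>v\<in>?U. \<forall>j<2. card {w\<in>?U. E v w \<and> f w = f v} \<le> card {w\<in>?U. E v w \<and> f w = j}"
    using coloring_exists[where E=E and U="?U" and k=2, OF sym irr finU] by auto
  obtain j where j: "j < 2" and jP: "card ?U \<le> 2 * card {u\<in>?U. f u = j}"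
    using pigeon[OF finU _ f2] by auto
  define P where "P = {u\<in>?U. f u = j}"
  have PU: "P \<subseteq> ?U" unfolding P_def by auto
  define S where "S = P \<union> Y"
  have SV: "S \<subseteq> V" using PU YV unfolding S_def by auto
  have Q: "\<forall>s\<in>S. 2 \<le> card (nbhd V E s - S)"
  proof
    fix s assume "s \<in> S"
    then consider (y) "s \<in> Y" | (p) "s \<in> P" unfolding S_def by auto
    then show "2 \<le> card (nbhd V E s - S)"
    proof cases
      case y
      have "degree V E s = 2" using Y2 y by blast
      then show ?thesis using Y_out[OF sg y _ ind PU] unfolding S_def by blast
    next
      case p
      have sU: "s \<in> ?U" and fs: "f s = j" using p unfolding P_def by auto
      let ?A = "{w\<in>?U. E s w}"
      have d1: "card (nbhd V E s) = card ?A + card (nbhd V E s \<inter> NB V E Y)"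
        using out_decomp(1)[OF sg sU PU] .
      have d2: "card (nbhd V E s - S) = card (?A - P) + card (nbhd V E s \<inter> NB V E Y)"
        using out_decomp(2)[OF sg sU PU] unfolding S_def .
      have AP: "?A - P = {w\<in>?A. f w \<noteq> j}" unfolding P_def by auto
      have finA: "finite ?A" using finV by simp
      have eqs: "\<And>i. {w\<in>?A. f w = i} = {w\<in>?U. E s w \<and> f w = i}" by blast
      have opt0: "\<forall>i<2. card {w\<in>?U. E s w \<and> f w = f s} \<le> card {w\<in>?U. E s w \<and> f w = i}"
        using fopt sU by blast
      have opt: "\<forall>i<2. card {w\<in>?A. f w = j} \<le> card {w\<in>?A. f w = i}"
        unfolding eqs using opt0 fs by simp
      have f2A: "\<forall>w\<in>?A. f w < 2" using f2 by blast
      have le: "card ?A \<le> 2 * card {w\<in>?A. f w \<noteq> j}"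
        using two_out[OF finA f2A j opt] .
      have sV: "s \<in> V" using sU by blast
      have "degree V E s \<noteq> 2" using cov sU by blast
      moreover have "2 \<le> degree V E s" using deg sV by blast
      ultimately have "3 \<le> degree V E s" by simp
      then have "3 \<le> card ?A + card (nbhd V E s \<inter> NB V E Y)" using d1 by (simp add: degree_def)
      then show ?thesis using d2 AP le by simp
    qed
  qed
  have ZS: "ZIr_set V E S" by (rule Q_ZIr[OF sg SV Q])
  have disj: "P \<inter> Y = {}" using PU by auto
  have cS: "card S = card P + card Y"
    unfolding S_def by (rule card_Un_disjoint) (use finU PU finV YV disj in \<open>auto intro: finite_subset\<close>)
  have "card V = card ?U + card Y + card (NB V E Y)" using sizes[OF sg YV ind] .
  then have "card V < 3 * card S" using cS jP cB unfolding P_def by linarith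
  then show ?thesis using ZS by blast
qed



lemma nbhd_disj:
  assumes sg: "simple_graph V E" and YV: "Y \<subseteq> V" and Y2: "\<forall>y\<in>Y. degree V E y = 2"
    and eq: "card (NB V E Y) = 2 * card Y"
    and y: "y \<in> Y" and y': "y' \<in> Y" and ne: "y \<noteq> y'"
  shows "nbhd V E y \<inter> nbhd V E y' = {}"
proof (rule ccontr)
  assume "nbhd V E y \<inter> nbhd V E y' \<noteq> {}"
  then obtain p where p: "p \<in> nbhd V E y" "p \<in> nbhd V E y'" by blast
  have finV: "finite V" using sg_facts(1)[OF sg] .
  have finY: "finite Y" using YV finV finite_subset by blast
  let ?R = "\<Union>z\<in>Y - {y}. nbhd V E z"
  have pR: "p \<in> ?R" using p y' ne by blast
  have "NB V E Y = (\<Union>z\<in>Y. nbhd V E z)" using NB_UN[OF sg YV] .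
  also have "\<dots> = (nbhd V E y - {p}) \<union> ?R" using y pR by blast
  finally have NBeq: "NB V E Y = (nbhd V E y - {p}) \<union> ?R" .
  have "card (NB V E Y) \<le> card (nbhd V E y - {p}) + card ?R"
    unfolding NBeq by (rule card_Un_le)
  also have "card (nbhd V E y - {p}) = 1"
    using Y2 y p(1) finite_nbhd[OF sg] by (simp add: degree_def)
  also have "card ?R \<le> (\<Sum>z\<in>Y - {y}. card (nbhd V E z))"
    by (rule card_UN_le) (use finY in auto)
  also have "(\<Sum>z\<in>Y - {y}. card (nbhd V E z)) = (\<Sum>z\<in>Y - {y}. 2)"
    using Y2 by (auto simp: degree_def)
  also have "\<dots> = 2 * (card Y - 1)" using y finY by simp
  finally have "card (NB V E Y) \<le> 1 + 2 * (card Y - 1)" by simp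
  moreover have "card Y \<ge> 1" using y finY card_0_eq by fastforce
  ultimately show False using eq by linarith
qed

lemma twin_fort:
  assumes sg: "simple_graph V E" and ny: "nbhd V E y = {m, c}" and mc: "m \<noteq> c"
    and Emc: "E m c" and dm: "degree V E m = 2"
  shows "is_fort V E {y, m}"
proof -
  have sym: "\<And>u w. E u w \<Longrightarrow> E w u" and irr: "\<And>u. \<not> E u u" using sg_facts[OF sg] by blast+
  have Eym: "E y m" and Eyc: "E y c" using ny unfolding nbhd_def by auto
  have yV: "y \<in> V" and mV: "m \<in> V" using Eym sg_facts[OF sg] by blast+
  have yc: "y \<noteq> c" using Eyc irr by blast
  have ym: "y \<noteq> m" using Eym irr by blast
  have sub: "{y, c} \<subseteq> nbhd V E m" using Eym Emc sym yV sg_facts[OF sg] unfolding nbhd_def by blast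
  have nm: "nbhd V E m = {y, c}"
  proof -
    have "card {y, c} = card (nbhd V E m)" using dm yc by (simp add: degree_def)
    then show ?thesis using card_subset_eq[OF finite_nbhd[OF sg] sub] by simp
  qed
  show ?thesis unfolding is_fort_def
  proof (intro conjI ballI)
    show "{y, m} \<noteq> {}" by simp
    show "{y, m} \<subseteq> V" using yV mV by simp
    fix v assume v: "v \<in> V - {y, m}"
    show "card (nbhd V E v \<inter> {y, m}) \<noteq> 1"
    proof (cases "v = c")
      case True
      have "nbhd V E v \<inter> {y, m} = {y, m}" using True Eyc Emc sym yV mV unfolding nbhd_def by blast
      then show ?thesis using ym by simp
    next
      case False
      have "y \<notin> nbhd V E v"
      proof
        assume "y \<in> nbhd V E v"
        then have "E y v" using sym unfolding nbhd_def by blast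
        then have "v \<in> nbhd V E y" using v unfolding nbhd_def by blast
        then show False using ny v False by blast
      qed
      moreover have "m \<notin> nbhd V E v"
      proof
        assume "m \<in> nbhd V E v"
        then have "E m v" using sym unfolding nbhd_def by blast
        then have "v \<in> nbhd V E m" using v unfolding nbhd_def by blast
        then show False using nm v False by blast
      qed
      ultimately have "nbhd V E v \<inter> {y, m} = {}" by blast
      then show ?thesis by simp
    qed
  qed
qed



lemma caseC:
  assumes sg: "simple_graph V E" and deg: "\<forall>v\<in>V. 2 \<le> degree V E v"
    and YV: "Y \<subseteq> V" and Y2: "\<forall>y\<in>Y. degree V E y = 2"
    and ind: "\<forall>a\<in>Y. \<forall>b\<in>Y. \<not> E a b"
    and cA: "2 * card Y \<le> card (NB V E Y)"
    and cB: "card V + 3 * card Y \<le> 3 * card (NB V E Y)"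
    and Vne: "V \<noteq> {}"
  shows "\<exists>S. ZIr_set V E S \<and> card V < 3 * card S"
proof -
  have finV: "finite V" using sg_facts(1)[OF sg] .
  have sym: "\<And>u w. E u w \<Longrightarrow> E w u" and irr: "\<And>u. \<not> E u u" using sg_facts[OF sg] by blast+
  have finY: "finite Y" using YV finV finite_subset by blast
  have NBc: "card (NB V E Y) = 2 * card Y" using card_NB[OF sg YV Y2] cA by simp
  have sz: "card V = card (V - (Y \<union> NB V E Y)) + card Y + card (NB V E Y)" using sizes[OF sg YV ind] .
  have U0: "card (V - (Y \<union> NB V E Y)) = 0" using sz NBc cB by linarith
  have Vc: "card V = 3 * card Y" using sz NBc U0 by simp
  have Ycov: "V \<subseteq> Y \<union> NB V E Y" using U0 finV by auto
  have Yne: "Y \<noteq> {}" using Vc Vne finV by auto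
  have disj: "\<And>y y'. y \<in> Y \<Longrightarrow> y' \<in> Y \<Longrightarrow> y \<noteq> y' \<Longrightarrow> nbhd V E y \<inter> nbhd V E y' = {}"
    using nbhd_disj[OF sg YV Y2 NBc] by blast
  have two: "\<And>y. y \<in> Y \<Longrightarrow> \<exists>p q. nbhd V E y = {p, q} \<and> p \<noteq> q"
    using Y2 by (auto simp: degree_def card_2_iff)
  have notY: "\<And>y p. y \<in> Y \<Longrightarrow> p \<in> nbhd V E y \<Longrightarrow> p \<notin> Y"
    using ind unfolding nbhd_def by blast
  have notNY: "\<And>y z p. y \<in> Y \<Longrightarrow> z \<in> Y \<Longrightarrow> z \<noteq> y \<Longrightarrow> p \<in> nbhd V E y \<Longrightarrow> \<not> E p z"
  proof -
    fix y z p assume a: "y \<in> Y" "z \<in> Y" "z \<noteq> y" "p \<in> nbhd V E y"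
    show "\<not> E p z"
    proof
      assume "E p z"
      then have "p \<in> nbhd V E z" using sym a(4) unfolding nbhd_def by blast
      then show False using disj[OF a(1) a(2)] a(3) a(4) by blast
    qed
  qed
  show ?thesis
  proof (cases "\<exists>y\<in>Y. \<exists>p q. nbhd V E y = {p, q} \<and> p \<noteq> q \<and> \<not> (E p q \<and> (degree V E p = 2 \<or> degree V E q = 2))")
    case True
    then obtain y p q where y: "y \<in> Y" and ny: "nbhd V E y = {p, q}" and pq: "p \<noteq> q"
      and nt: "\<not> (E p q \<and> (degree V E p = 2 \<or> degree V E q = 2))" by blast
    define S where "S = (Y - {y}) \<union> {p, q}"
    have pY: "p \<notin> Y" and qY: "q \<notin> Y" using notY[OF y] ny by auto
    have pV: "p \<in> V" and qV: "q \<in> V" using ny unfolding nbhd_def by auto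
    have SV: "S \<subseteq> V" using YV pV qV unfolding S_def by auto
    have outpq: "\<And>a b. nbhd V E y = {a, b} \<Longrightarrow> a \<noteq> b \<Longrightarrow> \<not> (E a b \<and> degree V E a = 2) \<Longrightarrow>
        2 \<le> card (nbhd V E a - S)"
    proof -
      fix a b assume ab: "nbhd V E y = {a, b}" "a \<noteq> b" "\<not> (E a b \<and> degree V E a = 2)"
      have aV: "a \<in> V" using ab(1) unfolding nbhd_def by auto
      have ain: "a \<in> nbhd V E y" using ab(1) by blast
      have n1: "nbhd V E a \<inter> (Y - {y}) = {}"
      proof (rule equals0I)
        fix z assume z: "z \<in> nbhd V E a \<inter> (Y - {y})"
        then have "E a z" "z \<in> Y" "z \<noteq> y" unfolding nbhd_def by auto
        then show False using notNY[OF y \<open>z \<in> Y\<close> \<open>z \<noteq> y\<close> ain] by blast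
      qed
      have pqab: "{p, q} = {a, b}" using ny ab(1) by simp
      have n2: "a \<notin> nbhd V E a" using irr unfolding nbhd_def by blast
      have "S = (Y - {y}) \<union> {a, b}" unfolding S_def pqab by simp
      then have eqa: "nbhd V E a - S = nbhd V E a - {b}" using n1 n2 by blast
      have da: "2 \<le> card (nbhd V E a)" using deg aV by (simp add: degree_def)
      show "2 \<le> card (nbhd V E a - S)"
      proof (cases "E a b")
        case True
        then have "degree V E a \<noteq> 2" using ab(3) by blast
        then have "3 \<le> card (nbhd V E a)" using da by (simp add: degree_def)
        moreover have "b \<in> nbhd V E a" using True sg_facts[OF sg] unfolding nbhd_def by blast
        ultimately show ?thesis using eqa finite_nbhd[OF sg] by simp
      next
        case False
        then have "nbhd V E a - {b} = nbhd V E a" unfolding nbhd_def by blast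
        then show ?thesis using eqa da by simp
      qed
    qed
    have Q: "\<forall>s\<in>S. 2 \<le> card (nbhd V E s - S)"
    proof
      fix s assume "s \<in> S"
      then consider (z) "s \<in> Y - {y}" | (pp) "s = p" | (qq) "s = q" unfolding S_def by blast
      then show "2 \<le> card (nbhd V E s - S)"
      proof cases
        case z
        have "nbhd V E s \<inter> S = {}"
        proof -
          have "nbhd V E s \<inter> (Y - {y}) = {}" using ind z unfolding nbhd_def by blast
          moreover have "p \<notin> nbhd V E s" "q \<notin> nbhd V E s" using disj[of y s] y z ny by auto
          ultimately show ?thesis unfolding S_def by blast
        qed
        then have "nbhd V E s - S = nbhd V E s" by blast
        then show ?thesis using Y2 z by (simp add: degree_def)
      next
        case pp
        have "\<not> (E p q \<and> degree V E p = 2)" using nt by blast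
        then show ?thesis using outpq[OF ny pq] pp by blast
      next
        case qq
        have ny': "nbhd V E y = {q, p}" using ny by blast
        have "\<not> (E q p \<and> degree V E q = 2)" using nt sym by blast
        then show ?thesis using outpq[OF ny' pq[symmetric]] qq by blast
      qed
    qed
    have ZS: "ZIr_set V E S" by (rule Q_ZIr[OF sg SV Q])
    have "card S = card (Y - {y}) + card {p, q}"
      unfolding S_def by (rule card_Un_disjoint) (use finY pY qY in auto)
    also have "card (Y - {y}) = card Y - 1" using y finY by simp
    also have "card {p, q} = 2" using pq by simp
    finally have cS: "card S = card Y - 1 + 2" .
    have "card Y \<ge> 1" using y finY by (metis One_nat_def Suc_leI card_gt_0_iff empty_iff)
    then have "card S = card Y + 1" using cS by simp
    then have "card V < 3 * card S" using Vc by simp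
    then show ?thesis using ZS by blast
  next
    case False
    then have tw: "\<And>y p q. y \<in> Y \<Longrightarrow> nbhd V E y = {p, q} \<Longrightarrow> p \<noteq> q \<Longrightarrow>
       E p q \<and> (degree V E p = 2 \<or> degree V E q = 2)" by blast
    have twin: "\<And>y. y \<in> Y \<Longrightarrow> \<exists>m c. nbhd V E y = {m, c} \<and> m \<noteq> c \<and> E m c \<and> degree V E m = 2"
    proof -
      fix y assume y: "y \<in> Y"
      obtain p q where pq: "nbhd V E y = {p, q}" "p \<noteq> q" using two[OF y] by blast
      have t: "E p q \<and> (degree V E p = 2 \<or> degree V E q = 2)" using tw[OF y pq] .
      show "\<exists>m c. nbhd V E y = {m, c} \<and> m \<noteq> c \<and> E m c \<and> degree V E m = 2"
      proof (cases "degree V E p = 2")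
        case True then show ?thesis using pq t by blast
      next
        case False
        then have "degree V E q = 2" using t by blast
        moreover have "nbhd V E y = {q, p}" using pq by blast
        moreover have "E q p" using t sym by blast
        ultimately show ?thesis using pq by blast
      qed
    qed
    obtain y0 where y0: "y0 \<in> Y" using Yne by blast
    obtain m0 c0 where m0: "nbhd V E y0 = {m0, c0}" "m0 \<noteq> c0" "E m0 c0" "degree V E m0 = 2"
      using twin[OF y0] by blast
    define S where "S = insert c0 Y"
    have c0Y: "c0 \<notin> Y" using notY[OF y0] m0(1) by blast
    have c0V: "c0 \<in> V" using m0(1) unfolding nbhd_def by auto
    have SV: "S \<subseteq> V" using YV c0V unfolding S_def by auto
    have ZS: "ZIr_set V E S" unfolding ZIr_set_def
    proof (intro conjI ballI)
      show "S \<subseteq> V" by fact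
      fix x assume x: "x \<in> S"
      show "\<exists>F. private_fort V E S x F"
      proof (cases "x = c0")
        case True
        have "is_fort V E (V - Y)" unfolding is_fort_def
        proof (intro conjI ballI)
          show "V - Y \<noteq> {}" using c0V c0Y by blast
          show "V - Y \<subseteq> V" by blast
          fix v assume v: "v \<in> V - (V - Y)"
          then have vY: "v \<in> Y" by blast
          have "nbhd V E v \<inter> (V - Y) = nbhd V E v" using ind vY unfolding nbhd_def by blast
          then show "card (nbhd V E v \<inter> (V - Y)) \<noteq> 1" using Y2 vY by (simp add: degree_def)
        qed
        moreover have "S \<inter> (V - Y) = {x}" using True c0V c0Y unfolding S_def by blast
        ultimately show ?thesis unfolding private_fort_def by blast
      next
        case False
        then have xY: "x \<in> Y" using x unfolding S_def by blast
        obtain m c where mc: "nbhd V E x = {m, c}" "m \<noteq> c" "E m c" "degree V E m = 2"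
          "x = y0 \<longrightarrow> m = m0"
        proof (cases "x = y0")
          case True then show ?thesis using that m0 by blast
        next
          case False
          obtain m c where "nbhd V E x = {m, c} \<and> m \<noteq> c \<and> E m c \<and> degree V E m = 2"
            using twin[OF xY] by blast
          then show ?thesis using that False by blast
        qed
        have F: "is_fort V E {x, m}" using twin_fort[OF sg mc(1) mc(2) mc(3) mc(4)] .
        have mY: "m \<notin> Y" using notY[OF xY] mc(1) by blast
        have mc0: "m \<noteq> c0"
        proof (cases "x = y0")
          case True then show ?thesis using mc(5) m0(2) by blast
        next
          case False
          have "nbhd V E x \<inter> nbhd V E y0 = {}" using disj[OF xY y0 False] .
          then show ?thesis using mc(1) m0(1) by blast
        qed
        have "S \<inter> {x, m} = {x}" using x mY mc0 unfolding S_def by blast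
        then show ?thesis using F unfolding private_fort_def by blast
      qed
    qed
    have "card S = card Y + 1" unfolding S_def using c0Y finY by simp
    then have "card V < 3 * card S" using Vc by simp
    then show ?thesis using ZS by blast
  qed
qed



theorem corollary4p7:
  fixes V :: "'a set" and E :: "'a \<Rightarrow> 'a \<Rightarrow> bool"
  assumes "simple_graph V E"
    and "card V \<ge> 3"
    and "min_degree V E = 2"
  shows "3 * ZIR V E > card V"
proof -
  note sg = assms(1)
  have finV: "finite V" using sg_facts(1)[OF sg] .
  have sym: "\<And>u w. E u w \<Longrightarrow> E w u" using sg_facts[OF sg] by blast
  have Vne: "V \<noteq> {}" using assms(2) by auto
  have deg: "\<forall>v\<in>V. 2 \<le> degree V E v"
  proof
    fix v assume v: "v \<in> V"
    have "Min (degree V E ` V) \<le> degree V E v" by (rule Min_le) (use finV v in auto)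
    then show "2 \<le> degree V E v" using assms(3) unfolding min_degree_def by simp
  qed
  define D where "D = {v\<in>V. degree V E v = 2}"
  let ?P = "\<lambda>Y. Y \<subseteq> D \<and> (\<forall>a\<in>Y. \<forall>b\<in>Y. \<not> E a b)"
  have bnd: "\<forall>Y. ?P Y \<longrightarrow> card Y < Suc (card V)"
  proof (intro allI impI)
    fix Y assume "?P Y"
    then have "Y \<subseteq> V" unfolding D_def by auto
    then show "card Y < Suc (card V)" using card_mono[OF finV] by (simp add: less_Suc_eq_le)
  qed
  have "\<exists>Y. ?P Y \<and> (\<forall>Z. ?P Z \<longrightarrow> card Z \<le> card Y)"
    by (rule Lattices_Big.ex_has_greatest_nat[where k="{}" and b="Suc (card V)"]) (use bnd in auto)
  then obtain Y where PY: "?P Y" and Ymax: "\<forall>Z. ?P Z \<longrightarrow> card Z \<le> card Y" by blast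
  have YV: "Y \<subseteq> V" using PY unfolding D_def by auto
  have finY: "finite Y" using YV finV finite_subset by blast
  have Y2: "\<forall>y\<in>Y. degree V E y = 2" using PY unfolding D_def by auto
  have ind: "\<forall>a\<in>Y. \<forall>b\<in>Y. \<not> E a b" using PY by blast
  have cov: "\<forall>v\<in>V. degree V E v = 2 \<longrightarrow> v \<in> Y \<or> v \<in> NB V E Y"
  proof (intro ballI impI)
    fix v assume v: "v \<in> V" "degree V E v = 2"
    show "v \<in> Y \<or> v \<in> NB V E Y"
    proof (rule ccontr)
      assume nv: "\<not> (v \<in> Y \<or> v \<in> NB V E Y)"
      then have noadj: "\<forall>y\<in>Y. \<not> E y v" using v unfolding NB_def by blast
      have "?P (insert v Y)"
      proof
        show "insert v Y \<subseteq> D" using PY v unfolding D_def by auto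
        show "\<forall>a\<in>insert v Y. \<forall>b\<in>insert v Y. \<not> E a b"
          using ind noadj sym sg_facts(5)[OF sg] by blast
      qed
      then have "card (insert v Y) \<le> card Y" using Ymax by blast
      moreover have "card (insert v Y) = Suc (card Y)" using finY nv by simp
      ultimately show False by simp
    qed
  qed
  have "\<exists>S. ZIr_set V E S \<and> card V < 3 * card S"
  proof (cases "card (NB V E Y) < 2 * card Y")
    case True
    then show ?thesis using caseA[OF sg deg YV Y2 ind] by blast
  next
    case nA: False
    show ?thesis
    proof (cases "3 * card (NB V E Y) < card V + 3 * card Y")
      case True
      then show ?thesis using caseB[OF sg deg YV Y2 ind cov] by blast
    next
      case False
      then show ?thesis using caseC[OF sg deg YV Y2 ind _ _ Vne] nA by simp
    qed
  qed
  then obtain S where ZS: "ZIr_set V E S" and cS: "card V < 3 * card S" by blast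
  have "card S \<le> ZIR V E" using ZIR_ge[OF finV ZS] .
  then show ?thesis using cS by linarith
qed

end
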